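(* Let $(S^d,T^d)_{d\in\{1,\dots,D\}}$ be period counters for $N$ workers and $D$ days. Then $T^1=0$ and for all $1\le d\le D-1$: $S^d\le S^{d+1}$, $\;T^d\le T^{d+1}$, $\;T^{d+1}\le S^d$, and $\;S^{d+1}\le T^d+N$.
   Context: A schedule for $N$ workers on $D$ days is any map $f:\{n_1,\dots,n_N\}\times\{1,\dots,D\}\to\{\mathrm{ON},\mathrm{OFF}\}$. A work period of a worker is an inclusion-wise maximal set of consecutive days on which the worker is ON. Integers $(S^d,T^d)_{d\in\{1,\dots,D\}}$ are called period counters if there exists some schedule for $N$ workers on $D$ days such that for each $d$, $S^d$ is the number of work periods (over all workers) whose first day is among days $1,\dots,d$, and $T^d$ is the number of work periods whose last day is among days $1,\dots,d-1$; the counters are then said to represent that schedule. *)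

theory Defs
  imports Main
begin

text \<open>A schedule for N workers (indexed 1..N) on D days (1..D) is a map
  f :: worker => day => bool (True = ON); only values on {1..N} x {1..D} matter.\<close>

type_synonym schedule = "nat \<Rightarrow> nat \<Rightarrow> bool"

definition on_block :: "schedule \<Rightarrow> nat \<Rightarrow> nat \<Rightarrow> nat set \<Rightarrow> bool" where
  "on_block f D n P \<longleftrightarrow>
     P \<noteq> {} \<and> (\<exists>a b. P = {a..b}) \<and> P \<subseteq> {1..D} \<and> (\<forall>d\<in>P. f n d)"

definition work_period :: "schedule \<Rightarrow> nat \<Rightarrow> nat \<Rightarrow> nat set \<Rightarrow> bool" where
  "work_period f D n P \<longleftrightarrow>
     on_block f D n P \<and> (\<forall>Q. on_block f D n Q \<and> P \<subseteq> Q \<longrightarrow> Q = P)"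

definition work_periods :: "schedule \<Rightarrow> nat \<Rightarrow> nat \<Rightarrow> (nat \<times> nat set) set" where
  "work_periods f N D = {(n, P). n \<in> {1..N} \<and> work_period f D n P}"

definition period_counters ::
  "nat \<Rightarrow> nat \<Rightarrow> (nat \<Rightarrow> int) \<Rightarrow> (nat \<Rightarrow> int) \<Rightarrow> bool" where
  "period_counters N D S T \<longleftrightarrow>
     (\<exists>f :: schedule. \<forall>d\<in>{1..D}.
        S d = int (card {(n, P) \<in> work_periods f N D. Min P \<in> {1..d}}) \<and>
        T d = int (card {(n, P) \<in> work_periods f N D. Max P \<in> {1..d-1}}))"

end

theory Submission
  imports Defs
begin
lemma wp_ob: "work_period f D n P \<Longrightarrow> on_block f D n P"
  unfolding work_period_def by (rule conjunct1)

lemma Min_ivl: "(a::nat) \<le> b \<Longrightarrow> Min {a..b} = a"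
  by (rule Min_eqI) auto

lemma Max_ivl: "(a::nat) \<le> b \<Longrightarrow> Max {a..b} = b"
  by (rule Max_eqI) auto

lemma wp_interval:
  assumes "work_period f D n P"
  shows "\<exists>a b. P = {a..b} \<and> a \<le> b \<and> 1 \<le> a \<and> b \<le> D"
proof -
  have ob: "on_block f D n P" using assms by (rule wp_ob)
  have "\<exists>a b. P = {a..b}" using ob unfolding on_block_def by (elim conjE)
  then obtain a b where P1: "P = {a..b}" by (elim exE)
  have P2: "P \<noteq> {}" "P \<subseteq> {1..D}" using ob unfolding on_block_def by simp_all
  have ab: "a \<le> b" using P1 P2 by simp
  then have "1 \<le> a" "b \<le> D" using P1 P2 by auto
  with P1 ab show ?thesis by blast
qed

lemma wp_minmax:
  assumes "work_period f D n P"
  shows "1 \<le> Min P \<and> Min P \<le> Max P \<and> Max P \<le> D"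
proof -
  obtain a b where "P = {a..b}" "a \<le> b" "1 \<le> a" "b \<le> D" using wp_interval[OF assms] by blast
  then show ?thesis by (simp add: Min_ivl Max_ivl)
qed

lemma wp_fin: "finite (work_periods f N D)"
proof -
  have "x \<in> {1..N} \<times> Pow {1..D}" if "x \<in> work_periods f N D" for x
  proof -
    obtain n P where x: "x = (n, P)" by (cases x)
    have "n \<in> {1..N}" "work_period f D n P" using that x unfolding work_periods_def by simp_all
    then have "P \<subseteq> {1..D}" using wp_ob unfolding on_block_def by blast
    then show ?thesis using x \<open>n \<in> {1..N}\<close> by simp
  qed
  then have "work_periods f N D \<subseteq> {1..N} \<times> Pow {1..D}" by blast
  then show ?thesis by (rule finite_subset) simp
qed

lemma wp_on: "work_period f D n P \<Longrightarrow> x \<in> P \<Longrightarrow> f n x"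
  using wp_ob unfolding on_block_def by blast

lemma wp_max: "work_period f D n P \<Longrightarrow> on_block f D n Q \<Longrightarrow> P \<subseteq> Q \<Longrightarrow> Q = P"
  unfolding work_period_def by blast

lemma wp_unique:
  assumes P: "work_period f D n P" and Q: "work_period f D n Q"
    and "Min P \<le> d+1" "d \<le> Max P" "Min Q \<le> d+1" "d \<le> Max Q"
  shows "P = Q"
proof -
  obtain a b where ab: "P = {a..b}" "a \<le> b" "1 \<le> a" "b \<le> D" using wp_interval[OF P] by blast
  obtain a' b' where ab': "Q = {a'..b'}" "a' \<le> b'" "1 \<le> a'" "b' \<le> D" using wp_interval[OF Q] by blast
  have mm: "Min P = a" "Max P = b" "Min Q = a'" "Max Q = b'" using ab ab' by (simp_all add: Min_ivl Max_ivl)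
  have U: "P \<union> Q = {min a a'..max b b'}"
    using ab(1,2) ab'(1,2) assms(3-6) unfolding mm by auto
  have "P \<union> Q \<noteq> {}" using ab by simp
  moreover have "\<exists>a b. P \<union> Q = {a..b}" using U by blast
  moreover have "P \<union> Q \<subseteq> {1..D}" using U ab ab' by auto
  moreover have "\<forall>x\<in>P \<union> Q. f n x" using wp_on[OF P] wp_on[OF Q] by blast
  ultimately have ob: "on_block f D n (P \<union> Q)"
    unfolding on_block_def by blast
  have "P \<union> Q = P" using wp_max[OF P ob] by blast
  moreover have "P \<union> Q = Q" using wp_max[OF Q ob] by blast
  ultimately show ?thesis by simp
qed

theorem lemma5p4:
  fixes N D :: nat and S T :: "nat \<Rightarrow> int"
  assumes "period_counters N D S T"
  shows "(1 \<le> D \<longrightarrow> T 1 = 0) \<and>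
         (\<forall>d. 1 \<le> d \<and> d \<le> D - 1 \<longrightarrow>
            S d \<le> S (d+1) \<and> T d \<le> T (d+1) \<and> T (d+1) \<le> S d \<and> S (d+1) \<le> T d + int N)"
proof -
  from assms[unfolded period_counters_def] obtain f where f: "\<forall>d\<in>{1..D}.
        S d = int (card {(n, P) \<in> work_periods f N D. Min P \<in> {1..d}}) \<and>
        T d = int (card {(n, P) \<in> work_periods f N D. Max P \<in> {1..d-1}})"
    by (elim exE)
  define W where "W = work_periods f N D"
  have finW: "finite W" unfolding W_def by (rule wp_fin)
  have Wwp: "\<And>x. x \<in> W \<Longrightarrow> fst x \<in> {1..N} \<and> work_period f D (fst x) (snd x)"
    unfolding W_def work_periods_def by auto
  have Wmm: "\<And>x. x \<in> W \<Longrightarrow> 1 \<le> Min (snd x) \<and> Min (snd x) \<le> Max (snd x) \<and> Max (snd x) \<le> D"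
    using Wwp wp_minmax by blast
  define SS where "SS d = {x \<in> W. Min (snd x) \<le> d}" for d
  define TT where "TT d = {x \<in> W. Max (snd x) < d}" for d
  have SSeq: "{(n, P) \<in> W. Min P \<in> {1..d}} = SS d" for d
  proof -
    have "x \<in> {(n, P) \<in> W. Min P \<in> {1..d}} \<longleftrightarrow> x \<in> SS d" for x
      using Wmm[of x] unfolding SS_def by (cases x) auto
    then show ?thesis by blast
  qed
  have TTeq: "{(n, P) \<in> W. Max P \<in> {1..d-1}} = TT d" for d
  proof -
    have "x \<in> {(n, P) \<in> W. Max P \<in> {1..d-1}} \<longleftrightarrow> x \<in> TT d" for x
      using Wmm[of x] unfolding TT_def by (cases x) auto
    then show ?thesis by blast
  qed
  have ST: "S d = int (card (SS d)) \<and> T d = int (card (TT d))" if "d \<in> {1..D}" for d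
  proof -
    have "S d = int (card {(n, P) \<in> W. Min P \<in> {1..d}}) \<and> T d = int (card {(n, P) \<in> W. Max P \<in> {1..d-1}})"
      using f that unfolding W_def by (rule bspec)
    then show ?thesis unfolding SSeq TTeq .
  qed
  have finS: "finite (SS d)" and finT: "finite (TT d)" for d
    unfolding SS_def TT_def using finW by auto
  have part1: "1 \<le> D \<longrightarrow> T 1 = 0"
  proof
    assume "1 \<le> D"
    then have "T 1 = int (card (TT 1))" using ST by auto
    moreover have "TT 1 = {}"
    proof -
      have "\<not> Max (snd x) < 1" if "x \<in> W" for x using Wmm[OF that] by linarith
      then show ?thesis unfolding TT_def by blast
    qed
    ultimately show "T 1 = 0" by simp
  qed
  have part2: "S d \<le> S (d+1) \<and> T d \<le> T (d+1) \<and> T (d+1) \<le> S d \<and> S (d+1) \<le> T d + int N"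
    if d: "1 \<le> d" "d \<le> D - 1" for d
  proof -
    have d1: "d \<in> {1..D}" "d+1 \<in> {1..D}" using d by auto
    have a: "card (SS d) \<le> card (SS (d+1))"
      by (rule card_mono[OF finS]) (auto simp: SS_def)
    have b: "card (TT d) \<le> card (TT (d+1))"
      by (rule card_mono[OF finT]) (auto simp: TT_def)
    have c: "card (TT (d+1)) \<le> card (SS d)"
    proof (rule card_mono[OF finS])
      show "TT (d+1) \<subseteq> SS d"
      proof
        fix x assume "x \<in> TT (d+1)"
        then have "x \<in> W" "Max (snd x) < d+1" unfolding TT_def by simp_all
        then show "x \<in> SS d" using Wmm[of x] unfolding SS_def by simp
      qed
    qed
    define B where "B = {x \<in> W. Min (snd x) \<le> d+1 \<and> d \<le> Max (snd x)}"
    have finB: "finite B" unfolding B_def using finW by auto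
    have sub: "SS (d+1) \<subseteq> TT d \<union> B"
      unfolding SS_def TT_def B_def by auto
    have injB: "inj_on fst B"
    proof (rule inj_onI)
      fix x y assume x: "x \<in> B" and y: "y \<in> B" and e: "fst x = fst y"
      have xW: "x \<in> W" and yW: "y \<in> W" using x y unfolding B_def by simp_all
      have "work_period f D (fst x) (snd x)" using Wwp[OF xW] by simp
      moreover have "work_period f D (fst x) (snd y)" using Wwp[OF yW] e by simp
      moreover have "Min (snd x) \<le> d+1" "d \<le> Max (snd x)" "Min (snd y) \<le> d+1" "d \<le> Max (snd y)"
        using x y unfolding B_def by simp_all
      ultimately have "snd x = snd y" by (rule wp_unique)
      then show "x = y" using e by (simp add: prod_eq_iff)
    qed
    have "fst ` B \<subseteq> {1..N}"
    proof
      fix y assume "y \<in> fst ` B"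
      then obtain x where "x \<in> B" "y = fst x" by blast
      then show "y \<in> {1..N}" using Wwp[of x] unfolding B_def by simp
    qed
    then have "card B \<le> card {1..N}" by (rule card_inj_on_le[OF injB]) simp
    then have cB: "card B \<le> N" by simp
    have "card (SS (d+1)) \<le> card (TT d \<union> B)"
      by (rule card_mono[OF _ sub]) (use finT finB in auto)
    also have "\<dots> \<le> card (TT d) + card B" by (rule card_Un_le)
    finally have e: "card (SS (d+1)) \<le> card (TT d) + N" using cB by linarith
    have S1: "S d = int (card (SS d))" "T d = int (card (TT d))" using ST[OF d1(1)] by simp_all
    have S2: "S (d+1) = int (card (SS (d+1)))" "T (d+1) = int (card (TT (d+1)))" using ST[OF d1(2)] by simp_all
    show ?thesis unfolding S1 S2 using a b c e by linarith
  qed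
  show ?thesis using part1 part2 by blast
qed
end
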